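(* Let $\Xi=(\xi_\sigma)_{\sigma\in[0,\omega_1)}$ be a strictly increasing transfinite sequence of countable ordinals, set $\xi_{\omega_1}=\omega_1$, and for each limit ordinal $\lambda\in[\omega,\omega_1]$ set $\zeta_\lambda=\sup\{\xi_\sigma:\sigma\in[0,\lambda)\}$. Then: (i) the map $U_\Xi$ given by $U_\Xi(\mathbf{1}_{[0,\sigma]})=\mathbf{1}_{[0,\xi_\sigma]}$ for $\sigma\in[0,\omega_1]$ extends uniquely to a linear isometry of $C([0,\omega_1])$ onto $\overline{\operatorname{span}}\{\mathbf{1}_{[0,\xi_\sigma]}:\sigma\in[0,\omega_1]\}$; (ii) $[0,\omega_1]=[0,\xi_0]\cup\bigcup_{\sigma\in[0,\omega_1)}[\xi_\sigma+1,\xi_{\sigma+1}]\cup\bigcup_{\lambda\in[\omega,\omega_1]\text{ limit}}[\zeta_\lambda,\xi_\lambda]$, where the intervals on the right-hand side are pairwise disjoint; (iii) the map $\varphi_\Xi\colon[0,\omega_1]\to[0,\omega_1]$ defined by $\varphi_\Xi(\alpha)=\xi_0$ for $\alpha\in[0,\xi_0]$, $\varphi_\Xi(\alpha)=\xi_{\sigma+1}$ for $\alpha\in[\xi_\sigma+1,\xi_{\sigma+1}]$ with $\sigma\in[0,\omega_1)$, and $\varphi_\Xi(\alpha)=\zeta_\lambda$ for $\alpha\in[\zeta_\lambda,\xi_\lambda]$ with $\lambda\in[\omega,\omega_1]$ a limit ordinal, is continuous and satisfies $\varphi_\Xi\circ\varphi_\Xi=\varphi_\Xi$; hence the composition operator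 $\Phi_\Xi\colon f\mapsto f\circ\varphi_\Xi$ is a contractive projection of $C([0,\omega_1])$ onto $\overline{\operatorname{span}}\{\mathbf{1}_{[0,\xi_\sigma]}:\sigma\in[0,\omega_1]\}$; (iv) the matrix of $\Phi_\Xi$ is given by $(\Phi_\Xi)_{\alpha,\beta}=\delta_{\beta,\xi_0}$ for $\alpha\in[0,\xi_0]$, $(\Phi_\Xi)_{\alpha,\beta}=\delta_{\beta,\xi_{\sigma+1}}$ for $\alpha\in[\xi_\sigma+1,\xi_{\sigma+1}]$ with $\sigma\in[0,\omega_1)$, and $(\Phi_\Xi)_{\alpha,\beta}=\delta_{\beta,\zeta_\lambda}$ for $\alpha\in[\zeta_\lambda,\xi_\lambda]$ with $\lambda\in[\omega,\omega_1]$ a limit ordinal.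
   Context: $\omega$ and $\omega_1$ are the first infinite and first uncountable ordinals; $[0,\omega_1]$ has the order topology and $C([0,\omega_1])$ is the Banach space of continuous scalar-valued functions on it with the sup norm; $0$ is considered a limit ordinal, but limits $\lambda$ above range over $[\omega,\omega_1]$. $\delta_{\alpha,\beta}$ is the Kronecker delta. The matrix of an operator $T$ on $C([0,\omega_1])$ is the unique family of scalars $T_{\alpha,\beta}$ with $\sum_\beta|T_{\alpha,\beta}|<\infty$ and $Tf(\alpha)=\sum_{\beta\in[0,\omega_1]}T_{\alpha,\beta}f(\beta)$ for all $f$ and $\alpha$. *)

theory Defs
  imports "HOL-Analysis.Analysis"
begin

text \<open>Ordinals in [0,omega_1] are modelled by a type 'a that is a well-order with
  bottom (the ordinal 0) and top (omega_1), carrying the order topology, such that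
  every proper initial segment is countable and the set below top is uncountable.\<close>

definition is_omega1_type :: "'a::{linorder_topology, wellorder, order_bot, order_top} itself \<Rightarrow> bool" where
  "is_omega1_type _ \<longleftrightarrow>
     (\<forall>x::'a. x < top \<longrightarrow> countable {..<x}) \<and> \<not> countable {..<(top::'a)}"

definition succ_ord :: "'a::wellorder \<Rightarrow> 'a" where
  "succ_ord x = (LEAST y. x < y)"

definition is_limit :: "'a::linorder \<Rightarrow> bool" where
  "is_limit l \<longleftrightarrow> (\<exists>b. b < l) \<and> (\<forall>b<l. \<exists>c. b < c \<and> c < l)"

definition zeta :: "('a::wellorder \<Rightarrow> 'a) \<Rightarrow> 'a \<Rightarrow> 'a" where
  "zeta xi l = (LEAST z. \<forall>s<l. xi s \<le> z)"

definition ind0 :: "'a::{linorder_topology, order_bot} \<Rightarrow> ('a \<Rightarrow>\<^sub>C real)" where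
  "ind0 a = Bcontfun (indicator {..a})"

definition phi_Xi :: "('a::{wellorder, order_bot, order_top} \<Rightarrow> 'a) \<Rightarrow> 'a \<Rightarrow> 'a" where
  "phi_Xi xi a =
    (if a \<le> xi bot then xi bot
     else if (\<exists>s<top. succ_ord (xi s) \<le> a \<and> a \<le> xi (succ_ord s))
       then xi (succ_ord (SOME s. s < top \<and> succ_ord (xi s) \<le> a \<and> a \<le> xi (succ_ord s)))
     else zeta xi (SOME l. is_limit l \<and> zeta xi l \<le> a \<and> a \<le> xi l))"

definition Phi_Xi :: "('a::{linorder_topology, wellorder, order_bot, order_top} \<Rightarrow> 'a)
    \<Rightarrow> ('a \<Rightarrow>\<^sub>C real) \<Rightarrow> ('a \<Rightarrow>\<^sub>C real)" where
  "Phi_Xi xi f = Bcontfun (apply_bcontfun f \<circ> phi_Xi xi)"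

definition matrix_of :: "(('a::topological_space \<Rightarrow>\<^sub>C real) \<Rightarrow> ('a \<Rightarrow>\<^sub>C real)) \<Rightarrow> 'a \<Rightarrow> 'a \<Rightarrow> real" where
  "matrix_of T = (THE M. \<forall>a. (\<lambda>b. \<bar>M a b\<bar>) summable_on UNIV \<and>
       (\<forall>f. apply_bcontfun (T f) a = (\<Sum>\<^sub>\<infinity>b. M a b * apply_bcontfun f b)))"

end

theory Submission
  imports Defs
begin



lemma succ_gt: "(x::'a::{wellorder, order_top}) < top \<Longrightarrow> x < succ_ord x"
  unfolding succ_ord_def by (rule LeastI)

lemma succ_le: "(x::'a::wellorder) < y \<Longrightarrow> succ_ord x \<le> y"
  unfolding succ_ord_def by (rule Least_le)

lemma less_succ_iff: "(x::'a::{wellorder, order_top}) < top \<Longrightarrow> y < succ_ord x \<longleftrightarrow> y \<le> x"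
  using succ_gt succ_le by (metis leD leI less_le_trans order_le_less_trans)

lemma open_atMost': "open {..(x::'a::{linorder_topology, wellorder, order_top})}"
proof (cases "x = top")
  case True
  then have "{..x} = UNIV" by auto
  then show ?thesis by simp
next
  case False
  then have "x < top" using top.not_eq_extremum by blast
  then have "{..x} = {..<succ_ord x}" using less_succ_iff by auto
  then show ?thesis by simp
qed

lemma open_Ioc': "open {y<..(x::'a::{linorder_topology, wellorder, order_top})}"
proof -
  have "{y<..x} = {y<..} \<inter> {..x}" by auto
  then show ?thesis using open_atMost'[of x] open_greaterThan[of y] by (metis open_Int)
qed

lemma trich: "(s::'a::{wellorder, order_bot, order_top}) = bot \<or> (\<exists>t<s. s = succ_ord t) \<or> is_limit s"
proof (cases "s = bot")
  case False
  then have ex: "\<exists>b. b < s" using bot.not_eq_extremum by blast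
  show ?thesis
  proof (cases "\<forall>b<s. \<exists>c. b < c \<and> c < s")
    case True then show ?thesis using ex by (simp add: is_limit_def)
  next
    case False
    then obtain b where b: "b < s" "\<forall>c. b < c \<longrightarrow> \<not> c < s" by blast
    have "b < top" using b(1) top.extremum_strict top.not_eq_extremum by fastforce
    then have "b < succ_ord b" by (rule succ_gt)
    moreover have "succ_ord b \<le> s" using b(1) by (rule succ_le)
    ultimately have "succ_ord b = s" using b(2) by (meson order.not_eq_order_implies_strict)
    then show ?thesis using b(1) by auto
  qed
qed simp

lemma cont_lemma:
  fixes g :: "'a::{linorder_topology, wellorder, order_bot, order_top} \<Rightarrow> 'a"
  assumes mono: "\<And>x y. x \<le> y \<Longrightarrow> g x \<le> g y"
    and left: "\<And>x y'. x \<noteq> bot \<Longrightarrow> y' < g x \<Longrightarrow> \<exists>y<x. \<forall>z. y < z \<and> z \<le> x \<longrightarrow> y' < g z"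
  shows "continuous_on UNIV g"
  unfolding continuous_on_open_vimage[OF open_UNIV]
proof (intro allI impI)
  fix B :: "'a set" assume B: "open B"
  show "open (g -` B \<inter> UNIV)"
  proof (rule Topological_Spaces.openI)
    fix x assume x: "x \<in> g -` B \<inter> UNIV"
    show "\<exists>T. open T \<and> x \<in> T \<and> T \<subseteq> g -` B \<inter> UNIV"
    proof (cases "x = bot")
      case True
      then have "{..x} = {x}" by (auto simp: bot_unique)
      then show ?thesis using x open_atMost'[of x] by auto
    next
      case xb: False
      show ?thesis
      proof (cases "g x = bot")
        case True
        have "{..x} \<subseteq> g -` B \<inter> UNIV"
        proof
          fix z assume "z \<in> {..x}"
          then have "g z \<le> bot" using mono[of z x] True by auto
          then have "g z = g x" using True bot_unique by auto
          then show "z \<in> g -` B \<inter> UNIV" using x by auto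
        qed
        then show ?thesis using open_atMost'[of x] by auto
      next
        case False
        then have "bot < g x" using bot.not_eq_extremum by blast
        then obtain b where b: "b < g x" "{b<..g x} \<subseteq> B" using open_left[OF B, of "g x"] x by auto
        obtain y where y: "y < x" "\<forall>z. y < z \<and> z \<le> x \<longrightarrow> b < g z" using left[OF xb b(1)] by auto
        have "{y<..x} \<subseteq> g -` B \<inter> UNIV"
        proof
          fix z assume "z \<in> {y<..x}"
          then have "b < g z" "g z \<le> g x" using y mono by auto
          then show "z \<in> g -` B \<inter> UNIV" using b(2) by auto
        qed
        then show ?thesis using open_Ioc'[of y x] y(1) by auto
      qed
    qed
  qed
qed

lemma ind_cont: "continuous_on UNIV (indicator {..(x::'a::{linorder_topology, wellorder, order_top})} :: 'a \<Rightarrow> real)"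
  unfolding continuous_on_open_vimage[OF open_UNIV]
proof (intro allI impI)
  fix B :: "real set"
  have o1: "open {..x}" by (rule open_atMost')
  have o2: "open (- {..x})" by (simp add: open_Compl)
  have "indicator {..x} -` B \<inter> UNIV \<in> {{}, {..x}, -{..x}, UNIV}"
  proof (cases "(1::real) \<in> B"; cases "(0::real) \<in> B")
    assume "1 \<in> B" "0 \<in> B" then have "indicator {..x} -` B \<inter> UNIV = UNIV" by (force simp: indicator_def of_bool_def split: if_splits)
    then show ?thesis by simp
  next
    assume "1 \<in> B" "0 \<notin> B" then have "indicator {..x} -` B \<inter> UNIV = {..x}" by (force simp: indicator_def of_bool_def split: if_splits)
    then show ?thesis by simp
  next
    assume "1 \<notin> B" "0 \<in> B" then have "indicator {..x} -` B \<inter> UNIV = -{..x}" by (force simp: indicator_def of_bool_def split: if_splits)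
    then show ?thesis by simp
  next
    assume "1 \<notin> B" "0 \<notin> B" then have "indicator {..x} -` B \<inter> UNIV = {}" by (force simp: indicator_def of_bool_def split: if_splits)
    then show ?thesis by simp
  qed
  then show "open (indicator {..x} -` B \<inter> UNIV)" using o1 o2 by auto
qed

lemma ind_bcont: "indicator {..(x::'a::{linorder_topology, wellorder, order_top})} \<in> (bcontfun :: ('a \<Rightarrow> real) set)"
  by (rule bcontfun_normI[OF ind_cont, of _ 1]) (simp add: indicator_def)

lemma apply_ind0: "apply_bcontfun (ind0 (x::'a::{linorder_topology, wellorder, order_bot, order_top})) = indicator {..x}"
  unfolding ind0_def using ind_bcont Bcontfun_inverse by blast

lemma comp_bcont:
  fixes f :: "'a::topological_space \<Rightarrow>\<^sub>C real" and g :: "'b::topological_space \<Rightarrow> 'a"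
  assumes "continuous_on UNIV g" shows "apply_bcontfun f \<circ> g \<in> bcontfun"
proof (rule bcontfun_normI[of _ "norm f"])
  show "continuous_on UNIV (apply_bcontfun f \<circ> g)"
    using assms by (rule continuous_on_compose) auto
  show "norm ((apply_bcontfun f \<circ> g) x) \<le> norm f" for x using norm_bounded[of f "g x"] by simp
qed

lemma apply_comp:
  fixes f :: "'a::topological_space \<Rightarrow>\<^sub>C real" and g :: "'b::topological_space \<Rightarrow> 'a"
  shows "continuous_on UNIV g \<Longrightarrow> apply_bcontfun (Bcontfun (apply_bcontfun f \<circ> g)) = apply_bcontfun f \<circ> g"
  using comp_bcont Bcontfun_inverse by blast



locale Xi =
  fixes xi :: "'a::{linorder_topology, wellorder, order_bot, order_top} \<Rightarrow> 'a"
  assumes mono: "strict_mono_on {..<top} xi" and ctbl: "\<forall>s<top. xi s < top" and xtop: "xi top = top"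
begin

lemma smono: "s < t \<Longrightarrow> xi s < xi t"
proof (cases "t = top")
  case True
  assume "s < t" then show ?thesis using True ctbl xtop by auto
next
  case False
  assume "s < t"
  then have "t < top" using False top.not_eq_extremum by blast
  then show ?thesis using mono \<open>s < t\<close> by (auto simp: strict_mono_on_def)
qed

lemma mono_le: "s \<le> t \<Longrightarrow> xi s \<le> xi t"
  using smono by (metis order_le_less)

lemma smono_iff: "xi s < xi t \<longleftrightarrow> s < t"
proof
  assume a: "xi s < xi t"
  show "s < t"
  proof (rule ccontr)
    assume "\<not> s < t" then have "t \<le> s" by simp
    then have "xi t \<le> xi s" by (rule mono_le)
    then show False using a by simp
  qed
qed (rule smono)

definition psi :: "'a \<Rightarrow> 'a" where "psi a = (LEAST s. a \<le> xi s)"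

lemma psi_ge: "a \<le> xi (psi a)"
  unfolding psi_def by (rule LeastI[of _ top]) (simp add: xtop)

lemma psi_le_iff: "psi a \<le> s \<longleftrightarrow> a \<le> xi s"
proof
  assume "psi a \<le> s" then show "a \<le> xi s" using order_trans[OF psi_ge mono_le] by simp
next
  assume "a \<le> xi s" then show "psi a \<le> s" unfolding psi_def by (rule Least_le)
qed

lemma psi_xi: "psi (xi s) = s"
proof -
  have 1: "psi (xi s) \<le> s" using psi_le_iff by simp
  have "xi s \<le> xi (psi (xi s))" by (rule psi_ge)
  then have "\<not> psi (xi s) < s" using smono_iff[of "psi (xi s)" s] by (meson leD)
  then show ?thesis using 1 by simp
qed

lemma psi_mono: "a \<le> b \<Longrightarrow> psi a \<le> psi b"
  using psi_le_iff[of a "psi b"] order_trans[OF _ psi_ge, of a b] by simp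

lemma zeta_ub: "t < l \<Longrightarrow> xi t \<le> zeta xi l"
proof -
  assume "t < l"
  have "\<forall>s<l. xi s \<le> zeta xi l" unfolding zeta_def by (rule LeastI[of _ top]) simp
  then show ?thesis using \<open>t < l\<close> by auto
qed

lemma zeta_least: "(\<And>t. t < l \<Longrightarrow> xi t \<le> z) \<Longrightarrow> zeta xi l \<le> z"
  unfolding zeta_def by (rule Least_le) auto

lemma zeta_le_xi: "zeta xi l \<le> xi l"
  by (rule zeta_least) (rule mono_le, rule less_imp_le)

lemma lt_top: "t < (s::'a) \<Longrightarrow> t < top"
  by (erule order_less_le_trans) (rule top_greatest)

lemma piece_bot: "a \<le> xi bot \<longleftrightarrow> psi a = bot"
  using psi_le_iff[of a bot] by (simp add: bot_unique)

lemma psi_lt_iff: "s < top \<Longrightarrow> xi s < a \<longleftrightarrow> s < psi a"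
  using psi_le_iff[of a s] by (simp add: not_le[symmetric])

lemma piece_succ: "s < top \<Longrightarrow> (succ_ord (xi s) \<le> a \<and> a \<le> xi (succ_ord s)) \<longleftrightarrow> psi a = succ_ord s"
proof -
  assume s: "s < top"
  have xs: "xi s < top" using s ctbl by auto
  have "succ_ord (xi s) \<le> a \<longleftrightarrow> xi s < a"
    using less_succ_iff[OF xs, of a] by auto
  also have "\<dots> \<longleftrightarrow> s < psi a" using psi_le_iff[of a s] by auto
  also have "\<dots> \<longleftrightarrow> succ_ord s \<le> psi a" using less_succ_iff[OF s, of "psi a"] by auto
  finally show ?thesis using psi_le_iff[of a "succ_ord s"] by auto
qed

lemma piece_lim: "is_limit l \<Longrightarrow> (zeta xi l \<le> a \<and> a \<le> xi l) \<longleftrightarrow> psi a = l"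
proof -
  assume l: "is_limit l"
  have "zeta xi l \<le> a \<longleftrightarrow> (\<forall>t<l. xi t < a)"
  proof
    assume z: "zeta xi l \<le> a"
    show "\<forall>t<l. xi t < a"
    proof (intro allI impI)
      fix t assume t: "t < l"
      then obtain c where c: "t < c" "c < l" using l by (auto simp: is_limit_def)
      have "xi t < xi c" using c smono by auto
      also have "\<dots> \<le> zeta xi l" using c zeta_ub by auto
      finally show "xi t < a" using z by auto
    qed
  next
    assume "\<forall>t<l. xi t < a"
    then show "zeta xi l \<le> a" by (intro zeta_least) (auto intro: less_imp_le)
  qed
  also have "\<dots> \<longleftrightarrow> (\<forall>t<l. t < psi a)" using psi_le_iff by (auto simp: not_le[symmetric])
  also have "\<dots> \<longleftrightarrow> l \<le> psi a"
  proof
    assume "\<forall>t<l. t < psi a" then show "l \<le> psi a" using not_le by blast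
  next
    assume "l \<le> psi a" then show "\<forall>t<l. t < psi a" by auto
  qed
  finally show ?thesis using psi_le_iff[of a l] by auto
qed

lemma succ_not_lim: "(s::'a) < top \<Longrightarrow> \<not> is_limit (succ_ord s)"
proof
  assume s: "s < top" and l: "is_limit (succ_ord s)"
  then obtain c where "s < c" "c < succ_ord s" using succ_gt[OF s] unfolding is_limit_def by blast
  then show False using less_succ_iff[OF s, of c] by simp
qed

lemma succ_inj: "(s::'a) < top \<Longrightarrow> t < top \<Longrightarrow> succ_ord s = succ_ord t \<Longrightarrow> s = t"
proof -
  assume s: "s < top" and t: "t < top" and e: "succ_ord s = succ_ord t"
  have "s < succ_ord t" using e succ_gt[OF s] by simp
  then have 1: "s \<le> t" using less_succ_iff[OF t] by simp
  have "t < succ_ord s" using e succ_gt[OF t] by simp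
  then have "t \<le> s" using less_succ_iff[OF s] by simp
  then show ?thesis using 1 by simp
qed

lemma bot_not_lim: "\<not> is_limit (bot::'a)"
  unfolding is_limit_def by auto

lemma succ_not_bot: "(s::'a) < top \<Longrightarrow> succ_ord s \<noteq> bot"
  using succ_gt by fastforce

definition rep :: "'a \<Rightarrow> 'a" where "rep s = (if is_limit s then zeta xi s else xi s)"

lemma rep_le_xi: "rep s \<le> xi s"
  unfolding rep_def using zeta_le_xi by auto

lemma psi_rep: "psi (rep s) = s"
  unfolding rep_def using piece_lim[of s "zeta xi s"] zeta_le_xi psi_xi by auto

lemma rep_ge: "t < s \<Longrightarrow> xi t \<le> rep s"
  unfolding rep_def using zeta_ub smono by (auto intro: less_imp_le)

lemma rep_mono: "s \<le> t \<Longrightarrow> rep s \<le> rep t"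
proof (cases "s = t")
  case False
  assume "s \<le> t" then have "s < t" using False by simp
  then have "xi s \<le> rep t" by (rule rep_ge)
  then show ?thesis using rep_le_xi[of s] by simp
qed simp

lemma cont_psi: "continuous_on UNIV psi"
proof (rule cont_lemma)
  show "x \<le> y \<Longrightarrow> psi x \<le> psi y" for x y by (rule psi_mono)
  fix x y' assume "x \<noteq> bot" "y' < psi x"
  then have 1: "xi y' < x" using psi_le_iff[of x y'] by auto
  have "\<forall>z. xi y' < z \<and> z \<le> x \<longrightarrow> y' < psi z" using psi_le_iff by (auto simp: not_le[symmetric])
  then show "\<exists>y<x. \<forall>z. y < z \<and> z \<le> x \<longrightarrow> y' < psi z" using 1 by blast
qed

lemma cont_rep: "continuous_on UNIV rep"
proof (rule cont_lemma)
  show "x \<le> y \<Longrightarrow> rep x \<le> rep y" for x y by (rule rep_mono)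
  fix x y' assume xb: "x \<noteq> bot" and y: "y' < rep x"
  show "\<exists>y<x. \<forall>z. y < z \<and> z \<le> x \<longrightarrow> y' < rep z"
  proof (cases "is_limit x")
    case True
    then have "y' < zeta xi x" using y by (simp add: rep_def)
    have "\<exists>t<x. y' < xi t"
    proof (rule ccontr)
      assume "\<not> (\<exists>t<x. y' < xi t)"
      then have "\<And>t. t < x \<Longrightarrow> xi t \<le> y'" by (meson not_less)
      then have "zeta xi x \<le> y'" by (rule zeta_least)
      then show False using \<open>y' < zeta xi x\<close> by simp
    qed
    then obtain t where t: "t < x" "y' < xi t" by blast
    have "\<forall>z. t < z \<and> z \<le> x \<longrightarrow> y' < rep z" using t rep_ge by (meson order_less_le_trans)
    then show ?thesis using t by blast
  next
    case False
    then obtain t where t: "t < x" "x = succ_ord t" using trich[of x] xb by auto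
    have "\<forall>z. t < z \<and> z \<le> x \<longrightarrow> z = x"
    proof (intro allI impI)
      fix z assume z: "t < z \<and> z \<le> x"
      then have "\<not> z < x" using t less_succ_iff[OF lt_top[OF t(1)], of z] by auto
      then show "z = x" using z by simp
    qed
    then show ?thesis using t y by blast
  qed
qed

lemma phi_eq: "phi_Xi xi a = rep (psi a)"
proof -
  consider "psi a = bot" | t where "t < psi a" "psi a = succ_ord t" | "is_limit (psi a)"
    using trich[of "psi a"] by auto
  then show ?thesis
  proof cases
    case 1
    then show ?thesis using piece_bot[of a] bot_not_lim by (simp add: phi_Xi_def rep_def)
  next
    case 2
    then have t: "t < top" using lt_top by blast
    have ex: "\<exists>s<top. succ_ord (xi s) \<le> a \<and> a \<le> xi (succ_ord s)" using piece_succ[OF t, of a] 2 t by auto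
    have nb: "\<not> a \<le> xi bot" using piece_bot[of a] 2 succ_not_bot[OF t] by auto
    define s where "s = (SOME s. s < top \<and> succ_ord (xi s) \<le> a \<and> a \<le> xi (succ_ord s))"
    have s: "s < top \<and> succ_ord (xi s) \<le> a \<and> a \<le> xi (succ_ord s)"
      unfolding s_def using someI_ex[OF ex] .
    then have "psi a = succ_ord s" using piece_succ by blast
    then have "s = t" using succ_inj[OF _ t] s 2 by auto
    have "phi_Xi xi a = xi (succ_ord s)"
      unfolding phi_Xi_def s_def by (subst if_not_P[OF nb], subst if_P[OF ex], rule refl)
    then show ?thesis using \<open>s = t\<close> 2 succ_not_lim[OF t] by (simp add: rep_def)
  next
    case 3
    have nb: "\<not> a \<le> xi bot" using piece_bot[of a] 3 bot_not_lim by auto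
    have nex: "\<not> (\<exists>s<top. succ_ord (xi s) \<le> a \<and> a \<le> xi (succ_ord s))"
    proof
      assume "\<exists>s<top. succ_ord (xi s) \<le> a \<and> a \<le> xi (succ_ord s)"
      then obtain s where "s < top" "succ_ord (xi s) \<le> a \<and> a \<le> xi (succ_ord s)" by blast
      then have "s < top" "psi a = succ_ord s" using piece_succ by auto
      then show False using 3 succ_not_lim by simp
    qed
    have ex: "\<exists>l. is_limit l \<and> zeta xi l \<le> a \<and> a \<le> xi l" using 3 piece_lim by blast
    define l where "l = (SOME l. is_limit l \<and> zeta xi l \<le> a \<and> a \<le> xi l)"
    have l: "is_limit l \<and> zeta xi l \<le> a \<and> a \<le> xi l" unfolding l_def using someI_ex[OF ex] .
    then have pl: "psi a = l" using piece_lim by blast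
    have "phi_Xi xi a = zeta xi l"
      unfolding phi_Xi_def l_def by (subst if_not_P[OF nb], subst if_not_P[OF nex], rule refl)
    then show ?thesis using pl 3 by (simp add: rep_def)
  qed
qed

lemma phi_eq': "phi_Xi xi = rep \<circ> psi"
  using phi_eq by auto

lemma cont_phi: "continuous_on UNIV (phi_Xi xi)"
  unfolding phi_eq' o_def by (rule continuous_on_compose2[OF cont_rep cont_psi]) simp

lemma phi_idem: "phi_Xi xi \<circ> phi_Xi xi = phi_Xi xi"
  unfolding phi_eq' by (auto simp: psi_rep)

end


lemma infsum_single:
  "infsum (\<lambda>b. if b = c then v else (0::real)) UNIV = v"
proof -
  have "infsum (\<lambda>b. if b = c then v else (0::real)) UNIV = infsum (\<lambda>b. if b = c then v else (0::real)) {c}"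
    by (rule infsum_cong_neutral) auto
  then show ?thesis by simp
qed

lemma summable_single:
  "(\<lambda>b. if b = c then v else (0::real)) summable_on UNIV"
proof -
  have "(\<lambda>b. if b = c then v else (0::real)) summable_on UNIV \<longleftrightarrow> (\<lambda>b. if b = c then v else (0::real)) summable_on {c}"
    by (rule summable_on_cong_neutral) auto
  then show ?thesis by simp
qed

lemma density:
  "closure (span (range ind0)) = (UNIV :: ('a::{linorder_topology, wellorder, order_bot, order_top} \<Rightarrow>\<^sub>C real) set)"
proof -
  have approx: "\<exists>g\<in>span (range ind0). (\<forall>z\<le>x. \<bar>apply_bcontfun f z - apply_bcontfun g z\<bar> \<le> e)
             \<and> (\<forall>z. x < z \<longrightarrow> apply_bcontfun g z = 0)"
    if e: "e > 0" for f :: "'a \<Rightarrow>\<^sub>C real" and e and x :: 'a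
  proof (induction x rule: less_induct)
    case (less x)
    show ?case
    proof (cases "x = bot")
      case True
      define g where "g = apply_bcontfun f bot *\<^sub>R ind0 (bot::'a)"
      have "g \<in> span (range ind0)" unfolding g_def by (intro span_scale span_base) simp
      moreover have "\<forall>z\<le>x. \<bar>apply_bcontfun f z - apply_bcontfun g z\<bar> \<le> e"
        using True e by (auto simp: g_def apply_ind0 bot_unique)
      moreover have "\<forall>z. x < z \<longrightarrow> apply_bcontfun g z = 0"
        using True by (auto simp: g_def apply_ind0 bot_unique)
      ultimately show ?thesis by blast
    next
      case False
      then have bx: "bot < x" using bot.not_eq_extremum by blast
      have op: "open {z. \<bar>apply_bcontfun f z - apply_bcontfun f x\<bar> < e}"
        by (rule open_Collect_less) (auto intro!: continuous_intros)
      obtain y where y: "y < x" "{y<..x} \<subseteq> {z. \<bar>apply_bcontfun f z - apply_bcontfun f x\<bar> < e}"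
        using open_left[OF op _ bx] e by auto
      obtain g where g: "g \<in> span (range ind0)" "\<forall>z\<le>y. \<bar>apply_bcontfun f z - apply_bcontfun g z\<bar> \<le> e"
          "\<forall>z. y < z \<longrightarrow> apply_bcontfun g z = 0"
        using less[OF y(1)] by blast
      define g' where "g' = g + apply_bcontfun f x *\<^sub>R (ind0 x - ind0 y)"
      have "g' \<in> span (range ind0)" unfolding g'_def
        by (intro span_add g(1) span_scale span_diff span_base) auto
      moreover have "\<forall>z\<le>x. \<bar>apply_bcontfun f z - apply_bcontfun g' z\<bar> \<le> e"
      proof (intro allI impI)
        fix z assume z: "z \<le> x"
        show "\<bar>apply_bcontfun f z - apply_bcontfun g' z\<bar> \<le> e"
        proof (cases "z \<le> y")
          case True
          then show ?thesis using g(2) z by (simp add: g'_def apply_ind0)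
        next
          case False
          then have "z \<in> {y<..x}" using z by simp
          then have "\<bar>apply_bcontfun f z - apply_bcontfun f x\<bar> < e" using y(2) by blast
          then show ?thesis using g(3) z False by (simp add: g'_def apply_ind0)
        qed
      qed
      moreover have "\<forall>z. x < z \<longrightarrow> apply_bcontfun g' z = 0"
        using g(3) y(1) by (auto simp: g'_def apply_ind0)
      ultimately show ?thesis by blast
    qed
  qed
  have "f \<in> closure (span (range ind0))" for f :: "'a \<Rightarrow>\<^sub>C real"
    unfolding closure_approachable
  proof (intro allI impI)
    fix e :: real assume e: "e > 0"
    obtain g where g: "g \<in> span (range ind0)" "\<forall>z\<le>top. \<bar>apply_bcontfun f z - apply_bcontfun g z\<bar> \<le> e/2"
      using approx[where f=f and e="e/2" and x=top] e by auto
    have "dist g f \<le> e/2"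
      unfolding dist_norm
      by (rule norm_bound) (use g(2) in \<open>auto simp: abs_minus_commute\<close>)
    then show "\<exists>y\<in>span (range ind0). dist y f < e" using g(1) e by force
  qed
  then show ?thesis by auto
qed



context Xi begin

definition U :: "('a \<Rightarrow>\<^sub>C real) \<Rightarrow> ('a \<Rightarrow>\<^sub>C real)" where
  "U f = Bcontfun (apply_bcontfun f \<circ> psi)"

definition R :: "('a \<Rightarrow>\<^sub>C real) \<Rightarrow> ('a \<Rightarrow>\<^sub>C real)" where
  "R f = Bcontfun (apply_bcontfun f \<circ> rep)"

lemma apply_U: "apply_bcontfun (U f) = apply_bcontfun f \<circ> psi"
  unfolding U_def by (rule apply_comp[OF cont_psi])

lemma apply_R: "apply_bcontfun (R f) = apply_bcontfun f \<circ> rep"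
  unfolding R_def by (rule apply_comp[OF cont_rep])

lemma apply_Phi: "apply_bcontfun (Phi_Xi xi f) = apply_bcontfun f \<circ> phi_Xi xi"
  unfolding Phi_Xi_def by (rule apply_comp[OF cont_phi])

lemma linear_U: "linear U"
  by (rule linearI) (auto intro!: bcontfun_eqI simp: apply_U)

lemma linear_Phi: "linear (Phi_Xi xi)"
  by (rule linearI) (auto intro!: bcontfun_eqI simp: apply_Phi)

lemma U_ind: "U (ind0 s) = ind0 (xi s)"
  by (rule bcontfun_eqI) (simp add: apply_U apply_ind0 indicator_def psi_le_iff)

lemma norm_U: "norm (U f) = norm f"
proof (rule antisym)
  show "norm (U f) \<le> norm f"
  proof (rule norm_bound)
    fix x show "norm (apply_bcontfun (U f) x) \<le> norm f" using norm_bounded[of f "psi x"] by (simp add: apply_U)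
  qed
  show "norm f \<le> norm (U f)"
  proof (rule norm_bound)
    fix x
    have "apply_bcontfun f x = apply_bcontfun (U f) (xi x)" by (simp add: apply_U psi_xi)
    then show "norm (apply_bcontfun f x) \<le> norm (U f)" using norm_bounded[of "U f" "xi x"] by simp
  qed
qed

lemma norm_Phi: "norm (Phi_Xi xi f) \<le> norm f"
proof (rule norm_bound)
  fix x show "norm (apply_bcontfun (Phi_Xi xi f) x) \<le> norm f" using norm_bounded[of f "phi_Xi xi x"] by (simp add: apply_Phi)
qed

lemma Phi_idem: "Phi_Xi xi \<circ> Phi_Xi xi = Phi_Xi xi"
proof
  fix f :: "'a \<Rightarrow>\<^sub>C real"
  have "apply_bcontfun f \<circ> phi_Xi xi \<circ> phi_Xi xi = apply_bcontfun f \<circ> phi_Xi xi"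
    using phi_idem by (simp add: comp_assoc)
  then show "(Phi_Xi xi \<circ> Phi_Xi xi) f = Phi_Xi xi f"
    by (intro bcontfun_eqI) (simp add: apply_Phi)
qed

lemma Phi_ind: "Phi_Xi xi (ind0 (xi s)) = ind0 (xi s)"
proof (rule bcontfun_eqI)
  fix a
  have "rep (psi a) \<le> xi s \<longleftrightarrow> a \<le> xi s"
  proof
    assume "rep (psi a) \<le> xi s"
    then have "psi (rep (psi a)) \<le> s" using psi_le_iff by simp
    then show "a \<le> xi s" using psi_rep psi_le_iff by simp
  next
    assume "a \<le> xi s"
    then have "psi a \<le> s" using psi_le_iff by simp
    then show "rep (psi a) \<le> xi s" using rep_le_xi[of "psi a"] mono_le[of "psi a" s] by simp
  qed
  then show "apply_bcontfun (Phi_Xi xi (ind0 (xi s))) a = apply_bcontfun (ind0 (xi s)) a"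
    by (simp add: apply_Phi apply_ind0 phi_eq indicator_def)
qed

lemma Phi_UR: "Phi_Xi xi f = U (R f)"
  by (rule bcontfun_eqI) (simp add: apply_Phi apply_U apply_R phi_eq)

lemma bl_Phi: "bounded_linear (Phi_Xi xi)"
  using linear_Phi norm_Phi
  by (intro bounded_linear_intro[where K=1]) (auto simp: linear_add linear_scale)

lemma bl_U: "bounded_linear U"
  using linear_U norm_U
  by (intro bounded_linear_intro[where K=1]) (auto simp: linear_add linear_scale)

abbreviation "CC \<equiv> closure (span (range (\<lambda>s. ind0 (xi s))))"

lemma range_Phi: "range (Phi_Xi xi) = CC"
proof
  have rU: "range U \<subseteq> CC"
  proof -
    have "range U = U ` closure (span (range ind0))" by (subst density) (rule refl)
    also have "\<dots> \<subseteq> CC"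
    proof (rule image_closure_subset)
      show "continuous_on (closure (span (range ind0))) U" by (rule linear_continuous_on[OF bl_U])
      show "closed CC" by simp
      have "U ` span (range ind0) = span (U ` range ind0)"
        by (rule span_linear_image[OF linear_U, symmetric])
      also have "U ` range ind0 = range (\<lambda>s. ind0 (xi s))" by (simp add: image_image U_ind)
      finally show "U ` span (range ind0) \<subseteq> CC" using closure_subset by auto
    qed
    finally show ?thesis .
  qed
  show "range (Phi_Xi xi) \<subseteq> CC" using rU Phi_UR by auto
  have cl: "closed (range (Phi_Xi xi))"
  proof -
    have "range (Phi_Xi xi) = {f. Phi_Xi xi f = id f}"
      using Phi_idem by (auto simp: fun_eq_iff) (metis rangeI)
    moreover have "closed {f. Phi_Xi xi f = id f}"
      by (rule closed_Collect_eq) (auto intro: linear_continuous_on[OF bl_Phi] continuous_on_id)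
    ultimately show ?thesis by simp
  qed
  have sub: "subspace (range (Phi_Xi xi))"
    by (rule linear_subspace_image[OF linear_Phi subspace_UNIV])
  have "range (\<lambda>s. ind0 (xi s)) \<subseteq> range (Phi_Xi xi)" 
  proof (rule subsetI)
    fix g assume "g \<in> range (\<lambda>s. ind0 (xi s))"
    then obtain s where "g = ind0 (xi s)" by blast
    then have "g = Phi_Xi xi g" using Phi_ind by simp
    then show "g \<in> range (Phi_Xi xi)" by (metis rangeI)
  qed
  then have "span (range (\<lambda>s. ind0 (xi s))) \<subseteq> range (Phi_Xi xi)" by (rule span_minimal[OF _ sub])
  then show "CC \<subseteq> range (Phi_Xi xi)" by (rule closure_minimal[OF _ cl])
qed

lemma range_U: "range U = CC"
proof
  show "range U \<subseteq> CC"
  proof -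
    have "range U = U ` closure (span (range ind0))" by (subst density) (rule refl)
    also have "\<dots> \<subseteq> CC"
    proof (rule image_closure_subset)
      show "continuous_on (closure (span (range ind0))) U" by (rule linear_continuous_on[OF bl_U])
      show "closed CC" by simp
      have "U ` span (range ind0) = span (U ` range ind0)"
        by (rule span_linear_image[OF linear_U, symmetric])
      also have "U ` range ind0 = range (\<lambda>s. ind0 (xi s))" by (simp add: image_image U_ind)
      finally show "U ` span (range ind0) \<subseteq> CC" using closure_subset by auto
    qed
    finally show ?thesis .
  qed
  show "CC \<subseteq> range U"
  proof
    fix g assume "g \<in> CC"
    then obtain f where "g = Phi_Xi xi f" using range_Phi by (metis imageE)
    then have "g = U (R f)" using Phi_UR by simp
    then show "g \<in> range U" by (metis rangeI)
  qed
qed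

lemma U_unique:
  assumes V: "linear V" "\<forall>s. V (ind0 s) = ind0 (xi s)" "\<forall>f. norm (V f) = norm f"
  shows "V = U"
proof -
  have blV: "bounded_linear V"
    using V by (intro bounded_linear_intro[where K=1]) (auto simp: linear_add linear_scale)
  have cl: "closed {f. V f = U f}"
    by (rule closed_Collect_eq) (auto intro: linear_continuous_on[OF bl_U] linear_continuous_on[OF blV])
  have sub: "subspace {f. V f = U f}"
    unfolding subspace_def using V(1) linear_U
    by (auto simp: linear_add linear_scale linear_0)
  have "range ind0 \<subseteq> {f. V f = U f}" using V(2) U_ind by auto
  then have "span (range ind0) \<subseteq> {f. V f = U f}" by (rule span_minimal[OF _ sub])
  then have "closure (span (range ind0)) \<subseteq> {f. V f = U f}" by (rule closure_minimal[OF _ cl])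
  then show ?thesis using density by auto
qed

end


context Xi begin

lemma matrix_Phi: "matrix_of (Phi_Xi xi) a b = (if b = phi_Xi xi a then 1 else 0)"
proof -
  define M where "M = (\<lambda>a b. if b = phi_Xi xi a then 1 else (0::real))"
  have PM: "\<forall>a. (\<lambda>b. \<bar>M a b\<bar>) summable_on UNIV \<and>
       (\<forall>f. apply_bcontfun (Phi_Xi xi f) a = (\<Sum>\<^sub>\<infinity>b. M a b * apply_bcontfun f b))"
  proof (intro allI conjI)
    fix a f
    have "(\<lambda>b. \<bar>M a b\<bar>) = (\<lambda>b. if b = phi_Xi xi a then 1 else 0)" by (auto simp: M_def)
    then show "(\<lambda>b. \<bar>M a b\<bar>) summable_on UNIV" using summable_single by metis
    have "(\<lambda>b. M a b * apply_bcontfun f b) = (\<lambda>b. if b = phi_Xi xi a then apply_bcontfun f (phi_Xi xi a) else 0)"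
      by (auto simp: M_def)
    then show "apply_bcontfun (Phi_Xi xi f) a = (\<Sum>\<^sub>\<infinity>b. M a b * apply_bcontfun f b)"
      by (simp add: infsum_single apply_Phi)
  qed
  have uniq: "M' = M" if H: "\<forall>a. (\<lambda>b. \<bar>M' a b\<bar>) summable_on UNIV \<and>
       (\<forall>f. apply_bcontfun (Phi_Xi xi f) a = (\<Sum>\<^sub>\<infinity>b. M' a b * apply_bcontfun f b))" for M'
  proof (intro ext)
    fix a c
    show "M' a c = M a c"
    proof (induction c rule: less_induct)
      case (less c)
      define p where "p = phi_Xi xi a"
      have h: "(\<lambda>b. M' a b * apply_bcontfun (ind0 c) b) =
          (\<lambda>b. (if b = c then M' a c else 0) + (if b = p then (if p < c then 1 else 0) else 0))"
      proof
        fix b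
        show "M' a b * apply_bcontfun (ind0 c) b =
          (if b = c then M' a c else 0) + (if b = p then (if p < c then 1 else 0) else 0)"
        proof (cases "b < c")
          case True
          then show ?thesis using less[OF True] by (auto simp: apply_ind0 M_def p_def)
        next
          case False
          then show ?thesis by (cases "b = c") (auto simp: apply_ind0 M_def p_def)
        qed
      qed
      have "indicator {..c} p = (\<Sum>\<^sub>\<infinity>b. M' a b * apply_bcontfun (ind0 c) b)"
      proof -
        have "apply_bcontfun (Phi_Xi xi (ind0 c)) a = (\<Sum>\<^sub>\<infinity>b. M' a b * apply_bcontfun (ind0 c) b)" using H by blast
        then show ?thesis by (simp add: apply_Phi apply_ind0 p_def)
      qed
      also have "\<dots> = M' a c + (if p < c then 1 else 0)"
        unfolding h by (subst infsum_add) (auto intro: summable_single simp: infsum_single)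
      finally have "M' a c = indicator {..c} p - (if p < c then 1 else 0)" by simp
      then show ?case by (auto simp: M_def p_def indicator_def)
    qed
  qed
  have "matrix_of (Phi_Xi xi) = M"
    unfolding matrix_of_def by (rule the_equality) (use PM uniq in auto)
  then show ?thesis by (simp add: M_def)
qed

end

theorem lemma3p2:
  fixes xi :: "'a::{linorder_topology, wellorder, order_bot, order_top} \<Rightarrow> 'a"
  assumes omega1: "is_omega1_type TYPE('a)"
    and mono: "strict_mono_on {..<top} xi"
    and ctbl: "\<forall>s<top. xi s < top"
    and top: "xi top = top"
  shows
   "(\<exists>!U. linear U \<and> (\<forall>s. U (ind0 s) = ind0 (xi s)) \<and> (\<forall>f. norm (U f) = norm f)
        \<and> range U = closure (span (range (\<lambda>s. ind0 (xi s)))))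
    \<and>
    (UNIV = {..xi bot} \<union> (\<Union>s\<in>{..<top}. {succ_ord (xi s)..xi (succ_ord s)})
              \<union> (\<Union>l\<in>{l. is_limit l}. {zeta xi l..xi l})
     \<and> disjoint_family_on (\<lambda>s. {succ_ord (xi s)..xi (succ_ord s)}) {..<top}
     \<and> disjoint_family_on (\<lambda>l. {zeta xi l..xi l}) {l. is_limit l}
     \<and> (\<forall>s<top. {..xi bot} \<inter> {succ_ord (xi s)..xi (succ_ord s)} = {})
     \<and> (\<forall>l. is_limit l \<longrightarrow> {..xi bot} \<inter> {zeta xi l..xi l} = {})
     \<and> (\<forall>s<top. \<forall>l. is_limit l \<longrightarrow> {succ_ord (xi s)..xi (succ_ord s)} \<inter> {zeta xi l..xi l} = {}))
    \<and>
    (continuous_on UNIV (phi_Xi xi) \<and> phi_Xi xi \<circ> phi_Xi xi = phi_Xi xi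
     \<and> linear (Phi_Xi xi) \<and> (\<forall>f. norm (Phi_Xi xi f) \<le> norm f)
     \<and> Phi_Xi xi \<circ> Phi_Xi xi = Phi_Xi xi
     \<and> range (Phi_Xi xi) = closure (span (range (\<lambda>s. ind0 (xi s)))))
    \<and>
    (\<forall>a b. (a \<le> xi bot \<longrightarrow> matrix_of (Phi_Xi xi) a b = (if b = xi bot then 1 else 0))
       \<and> (\<forall>s<top. succ_ord (xi s) \<le> a \<and> a \<le> xi (succ_ord s) \<longrightarrow>
              matrix_of (Phi_Xi xi) a b = (if b = xi (succ_ord s) then 1 else 0))
       \<and> (\<forall>l. is_limit l \<and> zeta xi l \<le> a \<and> a \<le> xi l \<longrightarrow>
              matrix_of (Phi_Xi xi) a b = (if b = zeta xi l then 1 else 0)))"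
proof -
  interpret X: Xi xi using mono ctbl top by unfold_locales
  have P1: "\<exists>!U. linear U \<and> (\<forall>s. U (ind0 s) = ind0 (xi s)) \<and> (\<forall>f. norm (U f) = norm f)
        \<and> range U = closure (span (range (\<lambda>s. ind0 (xi s))))"
  proof (rule ex1I[of _ X.U])
    show "linear X.U \<and> (\<forall>s. X.U (ind0 s) = ind0 (xi s)) \<and> (\<forall>f. norm (X.U f) = norm f)
        \<and> range X.U = closure (span (range (\<lambda>s. ind0 (xi s))))"
      using X.linear_U X.U_ind X.norm_U X.range_U by blast
    fix V assume "linear V \<and> (\<forall>s. V (ind0 s) = ind0 (xi s)) \<and> (\<forall>f. norm (V f) = norm f)
        \<and> range V = closure (span (range (\<lambda>s. ind0 (xi s))))"
    then show "V = X.U" using X.U_unique by blast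
  qed
  have cover: "UNIV = {..xi bot} \<union> (\<Union>s\<in>{..<top}. {succ_ord (xi s)..xi (succ_ord s)})
              \<union> (\<Union>l\<in>{l. is_limit l}. {zeta xi l..xi l})"
  proof (rule set_eqI, rule iffI)
    fix a :: 'a
    consider "X.psi a = bot" | t where "t < X.psi a" "X.psi a = succ_ord t" | "is_limit (X.psi a)"
      using trich[of "X.psi a"] by auto
    then show "a \<in> {..xi bot} \<union> (\<Union>s\<in>{..<top}. {succ_ord (xi s)..xi (succ_ord s)})
              \<union> (\<Union>l\<in>{l. is_limit l}. {zeta xi l..xi l})"
    proof cases
      case 1 then show ?thesis using X.piece_bot by auto
    next
      case 2
      then have t: "t < top" using X.lt_top by blast
      then have "a \<in> {succ_ord (xi t)..xi (succ_ord t)}" using X.piece_succ[OF t, of a] 2 by auto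
      then show ?thesis using t by blast
    next
      case 3
      then have "a \<in> {zeta xi (X.psi a)..xi (X.psi a)}" using X.piece_lim[OF 3, of a] by auto
      then show ?thesis using 3 by blast
    qed
  qed simp
  have d1: "disjoint_family_on (\<lambda>s. {succ_ord (xi s)..xi (succ_ord s)}) {..<top}"
    unfolding disjoint_family_on_def
  proof (intro ballI impI)
    fix s t :: 'a assume s: "s \<in> {..<top}" and t: "t \<in> {..<top}" and st: "s \<noteq> t"
    show "{succ_ord (xi s)..xi (succ_ord s)} \<inter> {succ_ord (xi t)..xi (succ_ord t)} = {}"
    proof (rule ccontr)
      assume "{succ_ord (xi s)..xi (succ_ord s)} \<inter> {succ_ord (xi t)..xi (succ_ord t)} \<noteq> {}"
      then obtain a where "a \<in> {succ_ord (xi s)..xi (succ_ord s)}" "a \<in> {succ_ord (xi t)..xi (succ_ord t)}" by blast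
      then have "X.psi a = succ_ord s" "X.psi a = succ_ord t" using X.piece_succ s t by auto
      then show False using X.succ_inj s t st by auto
    qed
  qed
  have d2: "disjoint_family_on (\<lambda>l. {zeta xi l..xi l}) {l. is_limit l}"
    unfolding disjoint_family_on_def
  proof (intro ballI impI)
    fix s t :: 'a assume s: "s \<in> {l. is_limit l}" and t: "t \<in> {l. is_limit l}" and st: "s \<noteq> t"
    show "{zeta xi s..xi s} \<inter> {zeta xi t..xi t} = {}"
    proof (rule ccontr)
      assume "{zeta xi s..xi s} \<inter> {zeta xi t..xi t} \<noteq> {}"
      then obtain a where "a \<in> {zeta xi s..xi s}" "a \<in> {zeta xi t..xi t}" by blast
      then have "X.psi a = s" "X.psi a = t" using X.piece_lim s t by auto
      then show False using st by auto
    qed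
  qed
  have d3: "\<forall>s<top. {..xi bot} \<inter> {succ_ord (xi s)..xi (succ_ord s)} = {}"
  proof (intro allI impI)
    fix s :: 'a assume s: "s < top"
    show "{..xi bot} \<inter> {succ_ord (xi s)..xi (succ_ord s)} = {}"
    proof (rule ccontr)
      assume "{..xi bot} \<inter> {succ_ord (xi s)..xi (succ_ord s)} \<noteq> {}"
      then obtain a where "a \<in> {..xi bot}" "a \<in> {succ_ord (xi s)..xi (succ_ord s)}" by blast
      then have "X.psi a = bot" "X.psi a = succ_ord s" using X.piece_succ[OF s] X.piece_bot by auto
      then show False using X.succ_not_bot[OF s] by auto
    qed
  qed
  have d4: "\<forall>l. is_limit l \<longrightarrow> {..xi bot} \<inter> {zeta xi l..xi l} = {}"
  proof (intro allI impI)
    fix l :: 'a assume l: "is_limit l"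
    show "{..xi bot} \<inter> {zeta xi l..xi l} = {}"
    proof (rule ccontr)
      assume "{..xi bot} \<inter> {zeta xi l..xi l} \<noteq> {}"
      then obtain a where "a \<in> {..xi bot}" "a \<in> {zeta xi l..xi l}" by blast
      then have "X.psi a = bot" "X.psi a = l" using X.piece_lim[OF l] X.piece_bot by auto
      then show False using X.bot_not_lim l by auto
    qed
  qed
  have d5: "\<forall>s<top. \<forall>l. is_limit l \<longrightarrow> {succ_ord (xi s)..xi (succ_ord s)} \<inter> {zeta xi l..xi l} = {}"
  proof (intro allI impI)
    fix s l :: 'a assume s: "s < top" and l: "is_limit l"
    show "{succ_ord (xi s)..xi (succ_ord s)} \<inter> {zeta xi l..xi l} = {}"
    proof (rule ccontr)
      assume "{succ_ord (xi s)..xi (succ_ord s)} \<inter> {zeta xi l..xi l} \<noteq> {}"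
      then obtain a where "a \<in> {succ_ord (xi s)..xi (succ_ord s)}" "a \<in> {zeta xi l..xi l}" by blast
      then have "X.psi a = succ_ord s" "X.psi a = l" using X.piece_lim[OF l] X.piece_succ[OF s] by auto
      then show False using X.succ_not_lim[OF s] l by auto
    qed
  qed
  have P4: "\<forall>a b. (a \<le> xi bot \<longrightarrow> matrix_of (Phi_Xi xi) a b = (if b = xi bot then 1 else 0))
       \<and> (\<forall>s<top. succ_ord (xi s) \<le> a \<and> a \<le> xi (succ_ord s) \<longrightarrow>
              matrix_of (Phi_Xi xi) a b = (if b = xi (succ_ord s) then 1 else 0))
       \<and> (\<forall>l. is_limit l \<and> zeta xi l \<le> a \<and> a \<le> xi l \<longrightarrow>
              matrix_of (Phi_Xi xi) a b = (if b = zeta xi l then 1 else 0))"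
  proof (intro allI conjI impI)
    fix a b :: 'a
    assume "a \<le> xi bot"
    then have "phi_Xi xi a = xi bot" using X.piece_bot X.bot_not_lim by (simp add: X.phi_eq X.rep_def)
    then show "matrix_of (Phi_Xi xi) a b = (if b = xi bot then 1 else 0)" by (simp add: X.matrix_Phi)
  next
    fix a b s :: 'a
    assume s: "s < top" and "succ_ord (xi s) \<le> a \<and> a \<le> xi (succ_ord s)"
    then have "X.psi a = succ_ord s" using X.piece_succ by blast
    then have "phi_Xi xi a = xi (succ_ord s)" using X.succ_not_lim[OF s] by (simp add: X.phi_eq X.rep_def)
    then show "matrix_of (Phi_Xi xi) a b = (if b = xi (succ_ord s) then 1 else 0)" by (simp add: X.matrix_Phi)
  next
    fix a b l :: 'a
    assume H: "is_limit l \<and> zeta xi l \<le> a \<and> a \<le> xi l"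
    then have "X.psi a = l" using X.piece_lim by blast
    then have "phi_Xi xi a = zeta xi l" using H by (simp add: X.phi_eq X.rep_def)
    then show "matrix_of (Phi_Xi xi) a b = (if b = zeta xi l then 1 else 0)" by (simp add: X.matrix_Phi)
  qed
  show ?thesis
    using P1 cover d1 d2 d3 d4 d5 P4 X.cont_phi X.phi_idem X.linear_Phi X.norm_Phi X.Phi_idem X.range_Phi
    by blast
qed


end
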